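(* Let $(\mathcal{X},d)$ be a finite metric space $\mathcal{X}=\{x_0,x_1,\dots,x_n\}$ ($n\ge 1$, the $x_i$ pairwise distinct), and let $(\mathcal{Y},\|\cdot\|)$ be a non-trivial, strictly convex real Banach space. For every $y\in\operatorname{Lip}^1_0$ there exist an integer $k\le n+1$, points $y^1,\dots,y^k\in\operatorname{ext}(\operatorname{Lip}^1_0)$ and scalars $\lambda_1,\dots,\lambda_k\ge0$ with $\sum_{i=1}^k\lambda_i=1$ such that $y=\sum_{i=1}^k\lambda_i y^i$.
   Context: $\operatorname{Lip}^1_0$ denotes the set of all $y=(y_0,\dots,y_n)\in\mathcal{Y}^{n+1}$ with $y_0=0$ and $\|y_i-y_j\|\le d(x_i,x_j)$ for all $i,j\in\{0,1,\dots,n\}$; it is a convex subset of $\mathcal{Y}^{n+1}$. $\operatorname{ext}(C)$ denotes the set of extreme points of a convex set $C$ (points $y\in C$ such that $y=\lambda y^1+(1-\lambda)y^2$ with $y^1,y^2\in C$, $\lambda\in(0,1)$ forces $y^1=y^2=y$). *)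

theory Defs
  imports "HOL-Analysis.Analysis"
begin

definition strictly_convex_space :: "'b::real_normed_vector itself \<Rightarrow> bool" where
  "strictly_convex_space _ \<longleftrightarrow>
     (\<forall>u v :: 'b. norm u = 1 \<longrightarrow> norm v = 1 \<longrightarrow> u \<noteq> v \<longrightarrow> norm ((1/2) *\<^sub>R (u + v)) < 1)"

text \<open>Lip^1_0: maps from the finite metric space 'a (indexing the coordinates of
  Y^(n+1)) into Y that vanish at the base point x0 and are 1-Lipschitz.\<close>
definition Lip10 :: "'a::{finite,metric_space} \<Rightarrow> ('b::real_normed_vector, 'a) vec set" where
  "Lip10 x0 = {y. y $ x0 = 0 \<and> (\<forall>u v. norm (y $ u - y $ v) \<le> dist u v)}"

end

theory Submission
  imports Defs
begin

lemma sc_lemma: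
  fixes p q :: "'b::real_normed_vector"
  assumes sc: "strictly_convex_space TYPE('b)"
    and p: "norm p \<le> d" and q: "norm q \<le> d" and t: "0 < t" "t < 1"
    and eq: "norm ((1-t) *\<^sub>R p + t *\<^sub>R q) = d"
  shows "p = q"
proof (rule ccontr)
  assume ne: "p \<noteq> q"
  have "d \<le> (1-t) * norm p + t * norm q"
    using eq norm_triangle_ineq[of "(1-t) *\<^sub>R p" "t *\<^sub>R q"] t by simp
  note tri = this
  have h1: "(1-t) * norm p \<le> (1-t) * d" using p t by (intro mult_left_mono) auto
  have h2: "t * norm q \<le> t * d" using q t by (intro mult_left_mono) auto
  have dd: "(1-t) * d + t * d = d" by (simp add: algebra_simps)
  have np: "norm p = d"
  proof (rule ccontr)
    assume "norm p \<noteq> d"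
    then have "norm p < d" using p by simp
    then have "(1-t) * norm p < (1-t) * d" using t by (intro mult_strict_left_mono) auto
    then show False using tri h2 dd by linarith
  qed
  have nq: "norm q = d"
  proof (rule ccontr)
    assume "norm q \<noteq> d"
    then have "norm q < d" using q by simp
    then have "t * norm q < t * d" using t by (intro mult_strict_left_mono) auto
    then show False using tri h1 dd by linarith
  qed
  have "d \<noteq> 0" using ne np nq by auto
  then have d0: "d > 0" using np norm_ge_zero[of p] by linarith
  define u where "u = (1/d) *\<^sub>R p"
  define v where "v = (1/d) *\<^sub>R q"
  have nu: "norm u = 1" "norm v = 1" using np nq d0 by (simp_all add: u_def v_def)
  have "u \<noteq> v" using ne d0 by (simp add: u_def v_def)
  then have m: "norm ((1/2) *\<^sub>R (u + v)) < 1" using sc nu unfolding strictly_convex_space_def by blast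
  define m where "m = (1/2) *\<^sub>R (u + v)"
  have m1: "norm m < 1" using m m_def by simp
  have one: "norm ((1-t) *\<^sub>R u + t *\<^sub>R v) = 1"
  proof -
    have "(1-t) *\<^sub>R u + t *\<^sub>R v = (1/d) *\<^sub>R ((1-t) *\<^sub>R p + t *\<^sub>R q)"
      by (simp add: u_def v_def scaleR_add_right mult.commute)
    then show ?thesis using eq d0 by simp
  qed
  show False
  proof (cases "t \<le> 1/2")
    case True
    have "(1-t) *\<^sub>R u + t *\<^sub>R v = (1-2*t) *\<^sub>R u + (2*t) *\<^sub>R m"
      by (simp add: m_def algebra_simps flip: scaleR_2)
    then have "norm ((1-t) *\<^sub>R u + t *\<^sub>R v) \<le> (1-2*t) * norm u + (2*t) * norm m"
      using True t norm_triangle_ineq[of "(1-2*t) *\<^sub>R u" "(2*t) *\<^sub>R m"] by simp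
    also have "\<dots> < 1" using nu m1 t by (simp add: mult_strict_left_mono)
    finally show False using one by simp
  next
    case False
    have "(1-t) *\<^sub>R u + t *\<^sub>R v = (2*t-1) *\<^sub>R v + (2-2*t) *\<^sub>R m"
      by (simp add: m_def algebra_simps flip: scaleR_2)
    then have "norm ((1-t) *\<^sub>R u + t *\<^sub>R v) \<le> (2*t-1) * norm v + (2-2*t) * norm m"
      using False t norm_triangle_ineq[of "(2*t-1) *\<^sub>R v" "(2-2*t) *\<^sub>R m"] by simp
    also have "\<dots> < 1"
    proof -
      have "(2-2*t) * norm m < (2-2*t) * 1" using m1 t by (intro mult_strict_left_mono) auto
      then show ?thesis using nu by simp
    qed
    finally show False using one by simp
  qed
qed

lemma closed_sets_univ:
  fixes x0 :: "'a::{finite,metric_space}" and y :: "('b::real_normed_vector,'a) vec" and e :: 'b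
  assumes e: "e \<noteq> 0"
  and ext: "\<phi> extreme_point_of {\<psi>. \<psi>$x0 = 0 \<and> (\<chi> i. y$i + \<psi>$i *\<^sub>R e) \<in> Lip10 x0}"
  and S0: "x0 \<in> S"
  and Scl: "\<forall>i j. i \<in> S \<longrightarrow> norm ((y$i + \<phi>$i *\<^sub>R e) - (y$j + \<phi>$j *\<^sub>R e)) = dist i j \<longrightarrow> j \<in> S"
  shows "S = UNIV"
proof (rule ccontr)
  assume "S \<noteq> UNIV"
  then obtain j0 where j0: "j0 \<notin> S" by auto
  define K where "K = {\<psi>. \<psi>$x0 = 0 \<and> (\<chi> i. y$i + \<psi>$i *\<^sub>R e) \<in> Lip10 x0}"
  define w where "w = (\<lambda>i. y$i + \<phi>$i *\<^sub>R e)"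
  have extK: "\<phi> extreme_point_of K" using ext unfolding K_def .
  have phiK: "\<phi> \<in> K" using extK unfolding extreme_point_of_def by (rule conjunct1)
  then have phi0: "\<phi>$x0 = 0" and w0: "w x0 = 0" and wL: "\<And>u v. norm (w u - w v) \<le> dist u v"
    unfolding K_def Lip10_def w_def by auto
  define P where "P = (-S) \<times> S"
  have Pfin: "finite P" by simp
  have Pne: "P \<noteq> {}" using j0 S0 P_def by auto
  have strict: "\<And>u v. (u,v) \<in> P \<Longrightarrow> norm (w u - w v) < dist u v"
  proof -
    fix u v assume uv: "(u,v) \<in> P"
    show "norm (w u - w v) < dist u v"
    proof (rule ccontr)
      assume "\<not> ?thesis"
      then have "norm (w v - w u) = dist v u" using wL[of u v] by (simp add: norm_minus_commute dist_commute)
      then have "u \<in> S" using Scl uv unfolding P_def w_def by auto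
      then show False using uv P_def by auto
    qed
  qed
  define \<delta> where "\<delta> = Min ((\<lambda>(u,v). dist u v - norm (w u - w v)) ` P)"
  have \<delta>pos: "\<delta> > 0" unfolding \<delta>_def using Pfin Pne strict by (subst Min_gr_iff) auto
  have \<delta>le: "\<And>u v. (u,v) \<in> P \<Longrightarrow> \<delta> \<le> dist u v - norm (w u - w v)"
    unfolding \<delta>_def using Pfin by (intro Min_le) force+
  define \<epsilon> where "\<epsilon> = \<delta> / norm e"
  have \<epsilon>pos: "\<epsilon> > 0" using \<delta>pos e by (simp add: \<epsilon>_def)
  have \<epsilon>e: "\<epsilon> * norm e = \<delta>" using e by (simp add: \<epsilon>_def)
  define ind :: "(real,'a) vec" where "ind = (\<chi> i. if i \<in> S then 0 else 1)"
  have mem: "\<phi> + c *\<^sub>R ind \<in> K" if c: "\<bar>c\<bar> \<le> \<epsilon>" for c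
  proof -
    have ce: "norm (c *\<^sub>R e) \<le> \<delta>"
      using mult_right_mono[OF c norm_ge_zero[of e]] \<epsilon>e by simp
    have diff: "(y$u + (\<phi> + c *\<^sub>R ind)$u *\<^sub>R e) - (y$v + (\<phi> + c *\<^sub>R ind)$v *\<^sub>R e)
         = (w u - w v) + (c * (ind$u - ind$v)) *\<^sub>R e" for u v
      by (simp add: w_def algebra_simps)
    have "norm ((w u - w v) + (c * (ind$u - ind$v)) *\<^sub>R e) \<le> dist u v" for u v
    proof (cases "u \<in> S")
      case uS: True
      show ?thesis
      proof (cases "v \<in> S")
        case True then show ?thesis using uS wL by (simp add: ind_def)
      next
        case vS: False
        have "(w u - w v) + (c * (ind$u - ind$v)) *\<^sub>R e = - ((w v - w u) + c *\<^sub>R e)"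
          using uS vS by (simp add: ind_def algebra_simps)
        then have "norm ((w u - w v) + (c * (ind$u - ind$v)) *\<^sub>R e) \<le> norm (w v - w u) + norm (c *\<^sub>R e)"
          by (metis norm_minus_cancel norm_triangle_ineq)
        also have "\<dots> \<le> dist v u" using \<delta>le[of v u] uS vS ce by (simp add: P_def)
        finally show ?thesis by (simp add: dist_commute)
      qed
    next
      case uS: False
      show ?thesis
      proof (cases "v \<in> S")
        case vS: True
        have "(w u - w v) + (c * (ind$u - ind$v)) *\<^sub>R e = (w u - w v) + c *\<^sub>R e"
          using uS vS by (simp add: ind_def algebra_simps)
        then have "norm ((w u - w v) + (c * (ind$u - ind$v)) *\<^sub>R e) \<le> norm (w u - w v) + norm (c *\<^sub>R e)"
          by (metis norm_triangle_ineq)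
        also have "\<dots> \<le> dist u v" using \<delta>le[of u v] uS vS ce by (simp add: P_def)
        finally show ?thesis .
      next
        case False then show ?thesis using uS wL by (simp add: ind_def)
      qed
    qed
    then have nb: "\<And>u v. norm ((y$u + (\<phi> + c *\<^sub>R ind)$u *\<^sub>R e) - (y$v + (\<phi> + c *\<^sub>R ind)$v *\<^sub>R e)) \<le> dist u v"
      using diff by metis
    have z0: "(\<phi> + c *\<^sub>R ind)$x0 = 0" using phi0 S0 by (simp add: ind_def)
    have "y$x0 + (\<phi> + c *\<^sub>R ind)$x0 *\<^sub>R e = 0" using z0 w0 phi0 by (simp add: w_def)
    then show ?thesis using z0 nb unfolding K_def Lip10_def mem_Collect_eq vec_lambda_beta
      by blast
  qed
  have m1: "\<phi> + \<epsilon> *\<^sub>R ind \<in> K" using mem \<epsilon>pos by simp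
  have m2: "\<phi> + (-\<epsilon>) *\<^sub>R ind \<in> K" using mem[of "-\<epsilon>"] \<epsilon>pos by linarith
  have "\<phi> \<in> open_segment (\<phi> + \<epsilon> *\<^sub>R ind) (\<phi> + (-\<epsilon>) *\<^sub>R ind)"
  proof -
    have "(\<phi> + \<epsilon> *\<^sub>R ind) $ j0 \<noteq> (\<phi> + (-\<epsilon>) *\<^sub>R ind) $ j0"
      using j0 \<epsilon>pos by (simp add: ind_def)
    then have ne: "\<phi> + \<epsilon> *\<^sub>R ind \<noteq> \<phi> + (-\<epsilon>) *\<^sub>R ind" by metis
    have "\<phi> = (1 - 1/2) *\<^sub>R (\<phi> + \<epsilon> *\<^sub>R ind) + (1/2::real) *\<^sub>R (\<phi> + (-\<epsilon>) *\<^sub>R ind)"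
      by (simp add: vec_eq_iff algebra_simps)
    then show ?thesis unfolding in_segment(2) using ne
      by (intro conjI exI[of _ "1/2::real"]) auto
  qed
  moreover have "\<forall>a\<in>K. \<forall>b\<in>K. \<phi> \<notin> open_segment a b"
    using extK unfolding extreme_point_of_def by (rule conjunct2)
  ultimately show False using m1 m2 by metis
qed


lemma ext_lift:
  fixes x0 :: "'a::{finite,metric_space}" and y :: "('b::real_normed_vector,'a) vec" and e :: 'b
  assumes sc: "strictly_convex_space TYPE('b)" and e: "e \<noteq> 0"
  and ext: "\<phi> extreme_point_of {\<psi>. \<psi>$x0 = 0 \<and> (\<chi> i. y$i + \<psi>$i *\<^sub>R e) \<in> Lip10 x0}"
  shows "(\<chi> i. y$i + \<phi>$i *\<^sub>R e) extreme_point_of Lip10 x0"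
proof -
  define w where "w = (\<chi> i. y$i + \<phi>$i *\<^sub>R e)"
  have wL: "w \<in> Lip10 x0" using ext unfolding extreme_point_of_def w_def by (simp add: vec_lambda_beta)
  have "w \<notin> open_segment a b" if a: "a \<in> Lip10 x0" and b: "b \<in> Lip10 x0" for a b
  proof
    assume "w \<in> open_segment a b"
    then obtain t where ab: "a \<noteq> b" and t: "0 < t" "t < 1" and wt: "w = (1-t) *\<^sub>R a + t *\<^sub>R b"
      unfolding in_segment(2) by blast
    have wk: "\<And>k. w$k = (1-t) *\<^sub>R a$k + t *\<^sub>R b$k" using wt by simp
    define S where "S = {i. a$i = w$i \<and> b$i = w$i}"
    have S0: "x0 \<in> S" using a b wL unfolding S_def Lip10_def by simp
    have Scl: "\<forall>i j. i \<in> S \<longrightarrow> norm ((y$i + \<phi>$i *\<^sub>R e) - (y$j + \<phi>$j *\<^sub>R e)) = dist i j \<longrightarrow> j \<in> S"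
    proof (intro allI impI)
      fix i j assume iS: "i \<in> S" and tight: "norm ((y$i + \<phi>$i *\<^sub>R e) - (y$j + \<phi>$j *\<^sub>R e)) = dist i j"
      have tw: "norm (w$i - w$j) = dist i j" using tight by (simp add: w_def)
      have pa: "norm (a$i - a$j) \<le> dist i j" using a unfolding Lip10_def by simp
      have pb: "norm (b$i - b$j) \<le> dist i j" using b unfolding Lip10_def by simp
      have wd: "w$i - w$j = (1-t) *\<^sub>R (a$i - a$j) + t *\<^sub>R (b$i - b$j)"
        by (simp only: wk) (simp add: algebra_simps)
      then have eqn: "norm ((1-t) *\<^sub>R (a$i - a$j) + t *\<^sub>R (b$i - b$j)) = dist i j" using tw by simp
      have pq: "a$i - a$j = b$i - b$j" using sc_lemma[OF sc pa pb t eqn] .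
      have "w$i - w$j = a$i - a$j"
        using wd by (simp only: pq[symmetric] scaleR_collapse)
      then show "j \<in> S" using iS pq unfolding S_def by (simp add: algebra_simps)
    qed
    have "S = UNIV" using closed_sets_univ[OF e ext S0 Scl] .
    then have "a = b" unfolding S_def by (auto simp add: vec_eq_iff set_eq_iff)
    then show False using ab by simp
  qed
  then have "w extreme_point_of Lip10 x0" using wL unfolding extreme_point_of_def by (intro conjI ballI) auto
  then show ?thesis unfolding w_def .
qed

theorem theorem2:
  fixes x0 :: "'a::{finite,metric_space}"
    and y :: "('b::banach, 'a) vec"
  assumes "CARD('a) \<ge> 2"
    and "\<exists>v::'b. v \<noteq> 0"
    and "strictly_convex_space TYPE('b)"
    and "y \<in> Lip10 x0"
  shows "\<exists>k::nat. k \<le> CARD('a) \<and>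
           (\<exists>ys :: nat \<Rightarrow> ('b, 'a) vec. \<exists>l :: nat \<Rightarrow> real.
              (\<forall>i\<in>{1..k}. ys i extreme_point_of (Lip10 x0) \<and> l i \<ge> 0) \<and>
              (\<Sum>i=1..k. l i) = 1 \<and>
              y = (\<Sum>i=1..k. l i *\<^sub>R ys i))"
proof -
  obtain e :: 'b where e: "e \<noteq> 0" using assms(2) by blast
  define z where "z = (\<lambda>\<psi>::(real,'a) vec. (\<chi> i. y$i + \<psi>$i *\<^sub>R e))"
  define K where "K = {\<psi>. \<psi>$x0 = 0 \<and> (\<chi> i. y$i + \<psi>$i *\<^sub>R e) \<in> Lip10 x0}"
  have y0: "y$x0 = 0" and yL: "\<And>p q. norm (y$p - y$q) \<le> dist p q"
    using assms(4) unfolding Lip10_def by auto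
  have Keq: "K = {\<psi>. \<psi>$x0 = 0 \<and> y$x0 + \<psi>$x0 *\<^sub>R e = 0 \<and>
      (\<forall>p q. norm (y$p + \<psi>$p *\<^sub>R e - (y$q + \<psi>$q *\<^sub>R e)) \<le> dist p q)}"
    unfolding K_def Lip10_def by simp
  have K0: "0 \<in> K" unfolding Keq using y0 yL by simp
  have convK: "convex K"
    unfolding convex_def
  proof (intro ballI allI impI)
    fix \<phi> \<psi> and u v :: real
    assume \<phi>: "\<phi> \<in> K" and \<psi>: "\<psi> \<in> K" and uv: "0 \<le> u" "0 \<le> v" "u + v = 1"
    have x: "\<phi>$x0 = 0" "\<psi>$x0 = 0" using \<phi> \<psi> unfolding Keq by auto
    have "norm (y$p + (u *\<^sub>R \<phi> + v *\<^sub>R \<psi>)$p *\<^sub>R e - (y$q + (u *\<^sub>R \<phi> + v *\<^sub>R \<psi>)$q *\<^sub>R e)) \<le> dist p q" for p q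
    proof -
      have a: "norm (y$p + \<phi>$p *\<^sub>R e - (y$q + \<phi>$q *\<^sub>R e)) \<le> dist p q"
        using \<phi> unfolding Keq by auto
      have b: "norm (y$p + \<psi>$p *\<^sub>R e - (y$q + \<psi>$q *\<^sub>R e)) \<le> dist p q"
        using \<psi> unfolding Keq by auto
      have "y$p + (u *\<^sub>R \<phi> + v *\<^sub>R \<psi>)$p *\<^sub>R e - (y$q + (u *\<^sub>R \<phi> + v *\<^sub>R \<psi>)$q *\<^sub>R e)
          = u *\<^sub>R (y$p + \<phi>$p *\<^sub>R e - (y$q + \<phi>$q *\<^sub>R e)) + v *\<^sub>R (y$p + \<psi>$p *\<^sub>R e - (y$q + \<psi>$q *\<^sub>R e))"
      proof -
        have "y$p - y$q = u *\<^sub>R (y$p - y$q) + v *\<^sub>R (y$p - y$q)"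
          using uv(3) by (metis scaleR_add_left scaleR_one)
        then show ?thesis by (simp add: algebra_simps)
      qed
      then have "norm (y$p + (u *\<^sub>R \<phi> + v *\<^sub>R \<psi>)$p *\<^sub>R e - (y$q + (u *\<^sub>R \<phi> + v *\<^sub>R \<psi>)$q *\<^sub>R e))
          \<le> u * norm (y$p + \<phi>$p *\<^sub>R e - (y$q + \<phi>$q *\<^sub>R e)) + v * norm (y$p + \<psi>$p *\<^sub>R e - (y$q + \<psi>$q *\<^sub>R e))"
        using uv norm_triangle_ineq[of "u *\<^sub>R (y$p + \<phi>$p *\<^sub>R e - (y$q + \<phi>$q *\<^sub>R e))"
            "v *\<^sub>R (y$p + \<psi>$p *\<^sub>R e - (y$q + \<psi>$q *\<^sub>R e))"] by simp
      also have "\<dots> \<le> u * dist p q + v * dist p q"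
        using a b uv by (intro add_mono mult_left_mono) auto
      also have "\<dots> = dist p q" using uv(3) by (metis distrib_right mult_1)
      finally show ?thesis .
    qed
    then show "u *\<^sub>R \<phi> + v *\<^sub>R \<psi> \<in> K" unfolding Keq using x y0 by simp
  qed
  have closedK: "closed K" unfolding Keq
    by (intro closed_Collect_conj closed_Collect_all closed_Collect_le closed_Collect_eq continuous_intros)
  have boundedK: "bounded K"
    unfolding bounded_iff
  proof (intro exI ballI)
    fix \<psi> assume \<psi>: "\<psi> \<in> K"
    have "\<bar>\<psi>$i\<bar> \<le> (dist i x0 + norm (y$i)) / norm e" for i
    proof -
      have all: "\<forall>p q. norm (y$p + \<psi>$p *\<^sub>R e - (y$q + \<psi>$q *\<^sub>R e)) \<le> dist p q"
        using \<psi> unfolding Keq by simp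
      have a: "norm (y$i + \<psi>$i *\<^sub>R e - (y$x0 + \<psi>$x0 *\<^sub>R e)) \<le> dist i x0"
        using all[rule_format, of i x0] .
      have z: "y$x0 + \<psi>$x0 *\<^sub>R e = 0" using \<psi> unfolding Keq by auto
      have "\<bar>\<psi>$i\<bar> * norm e = norm ((y$i + \<psi>$i *\<^sub>R e) - y$i)" by simp
      also have "\<dots> \<le> norm (y$i + \<psi>$i *\<^sub>R e) + norm (y$i)" by (rule norm_triangle_ineq4)
      also have "\<dots> \<le> dist i x0 + norm (y$i)" using a z by simp
      finally show ?thesis using e by (simp add: pos_le_divide_eq)
    qed
    then have "(\<Sum>i\<in>UNIV. \<bar>\<psi>$i\<bar>) \<le> (\<Sum>i\<in>UNIV. (dist i x0 + norm (y$i)) / norm e)"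
      by (intro sum_mono) auto
    then show "norm \<psi> \<le> (\<Sum>i\<in>UNIV. (dist i x0 + norm (y$i)) / norm e)"
      using norm_le_l1_cart[of \<psi>] by linarith
  qed
  have compK: "compact K" using closedK boundedK compact_eq_bounded_closed by blast
  define E where "E = {\<phi>. \<phi> extreme_point_of K}"
  have "0 \<in> convex hull E" using Krein_Milman_Minkowski[OF compK convK] K0 E_def by simp
  then have "\<exists>S. finite S \<and> S \<subseteq> E \<and> card S \<le> aff_dim E + 1 \<and> 0 \<in> convex hull S"
    by (subst (asm) caratheodory_aff_dim) simp
  then obtain S where Sfin: "finite S" and SE: "S \<subseteq> E" and Scard: "card S \<le> aff_dim E + 1"
      and S0: "0 \<in> convex hull S"
    by blast
  have EK: "E \<subseteq> K" unfolding E_def extreme_point_of_def by (intro subsetI) simp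
  have "E \<subseteq> {\<psi>. axis x0 1 \<bullet> \<psi> = 0}" using EK unfolding Keq by (auto simp: inner_axis')
  then have "aff_dim E \<le> aff_dim {\<psi>::(real,'a) vec. axis x0 1 \<bullet> \<psi> = 0}" by (rule aff_dim_subset)
  also have "\<dots> = int CARD('a) - 1"
    by (subst aff_dim_hyperplane) (auto simp: axis_eq_0_iff)
  finally have cardS: "card S \<le> CARD('a)" using Scard by linarith
  obtain u where u0: "\<forall>x\<in>S. 0 \<le> u x" and u1: "sum u S = 1" and us: "(\<Sum>x\<in>S. u x *\<^sub>R x) = 0"
    using S0 unfolding convex_hull_finite[OF Sfin] by blast
  obtain g where g: "bij_betw g {1..card S} S" using ex_bij_betw_nat_finite_1[OF Sfin] by blast
  have yrep: "y = (\<Sum>\<phi>\<in>S. u \<phi> *\<^sub>R z \<phi>)"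
  proof (subst vec_eq_iff, intro allI)
    fix i
    have "(\<Sum>\<phi>\<in>S. u \<phi> *\<^sub>R z \<phi>) $ i = (\<Sum>\<phi>\<in>S. u \<phi> *\<^sub>R y$i + (u \<phi> * \<phi>$i) *\<^sub>R e)"
      by (simp add: sum_component z_def scaleR_add_right)
    also have "\<dots> = (sum u S) *\<^sub>R y$i + (\<Sum>\<phi>\<in>S. u \<phi> * \<phi>$i) *\<^sub>R e"
      by (simp add: sum.distrib scaleR_sum_left)
    also have "(\<Sum>\<phi>\<in>S. u \<phi> * \<phi>$i) = (\<Sum>x\<in>S. u x *\<^sub>R x) $ i"
      by (simp add: sum_component)
    finally show "y $ i = (\<Sum>\<phi>\<in>S. u \<phi> *\<^sub>R z \<phi>) $ i" using u1 us by simp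
  qed
  show ?thesis
  proof (intro exI conjI)
    show "card S \<le> CARD('a)" by (rule cardS)
    show "\<forall>i\<in>{1..card S}. (z \<circ> g) i extreme_point_of Lip10 x0 \<and> (u \<circ> g) i \<ge> 0"
    proof
      fix i assume i: "i \<in> {1..card S}"
      then have gi: "g i \<in> S" using g bij_betwE by blast
      then have "g i extreme_point_of K" using SE E_def by blast
      then have "z (g i) extreme_point_of Lip10 x0"
        unfolding z_def K_def by (rule ext_lift[OF assms(3) e])
      then show "(z \<circ> g) i extreme_point_of Lip10 x0 \<and> (u \<circ> g) i \<ge> 0" using gi u0 by simp
    qed
    show "(\<Sum>i=1..card S. (u \<circ> g) i) = 1"
      using sum.reindex_bij_betw[OF g, of u] u1 by simp
    show "y = (\<Sum>i=1..card S. (u \<circ> g) i *\<^sub>R (z \<circ> g) i)"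
      using sum.reindex_bij_betw[OF g, of "\<lambda>\<phi>. u \<phi> *\<^sub>R z \<phi>"] yrep by simp
  qed
qed

end
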